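(* Let $f$ be a non-negative, non-increasing differentiable function on an interval $[0,X]$ with a monotone hazard rate, i.e. $\frac{f(x)}{|f'(x)|}$ is non-increasing. If $\tilde x>0$ satisfies $\frac{f(\tilde x)}{|f'(\tilde x)|}>\tilde x$, then $f(0)<e\,f(\tilde x)$. *)

theory Defs
  imports "HOL-Analysis.Analysis"
begin

text \<open>The ratio f(x)/|f'(x)| (reciprocal hazard rate), with values in the extended reals:
  where f x = 0 the hazard rate |f'|/f is infinite, so the ratio is 0; where f x > 0 but
  f' x = 0 the ratio is +infinity.\<close>
definition inv_hazard :: "(real \<Rightarrow> real) \<Rightarrow> (real \<Rightarrow> real) \<Rightarrow> real \<Rightarrow> ereal" where
  "inv_hazard f f' x =
     (if f x = 0 then 0 else if f' x = 0 then \<infinity> else ereal (f x / \<bar>f' x\<bar>))"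

end

theory Submission
  imports Defs
begin

theorem lemma20:
  fixes f f' :: "real \<Rightarrow> real" and X xt :: real
  assumes deriv: "\<And>x. x \<in> {0..X} \<Longrightarrow> (f has_real_derivative f' x) (at x within {0..X})"
    and nonneg: "\<And>x. x \<in> {0..X} \<Longrightarrow> f x \<ge> 0"
    and noninc: "\<And>x y. x \<in> {0..X} \<Longrightarrow> y \<in> {0..X} \<Longrightarrow> x \<le> y \<Longrightarrow> f y \<le> f x"
    and mhr: "\<And>x y. x \<in> {0..X} \<Longrightarrow> y \<in> {0..X} \<Longrightarrow> x \<le> y \<Longrightarrow>
                inv_hazard f f' y \<le> inv_hazard f f' x"
    and xt: "0 < xt" "xt \<le> X"
    and big: "inv_hazard f f' xt > ereal xt"
  shows "f 0 < exp 1 * f xt"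
proof -
  have key: "xt * f' x + f x > 0" if x: "x \<in> {0..xt}" for x
  proof -
    have xX: "x \<in> {0..X}" using x xt by auto
    have "inv_hazard f f' xt \<le> inv_hazard f f' x"
      using mhr[OF xX] x xt by auto
    with big have gt: "ereal xt < inv_hazard f f' x" by simp
    have fx0: "f x \<noteq> 0"
    proof
      assume "f x = 0"
      then have "inv_hazard f f' x = 0" by (simp add: inv_hazard_def)
      with gt xt show False by (simp add: zero_ereal_def)
    qed
    have fpos: "f x > 0" using fx0 nonneg[OF xX] by simp
    show ?thesis
    proof (cases "f' x = 0")
      case True then show ?thesis using fpos by simp
    next
      case False
      then have "xt < f x / \<bar>f' x\<bar>" using gt fx0 by (simp add: inv_hazard_def)
      then have "xt * \<bar>f' x\<bar> < f x" using False by (simp add: field_simps)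
      moreover have "- (xt * f' x) \<le> xt * \<bar>f' x\<bar>" using xt
        by (metis abs_ge_minus_self abs_mult abs_of_pos minus_mult_right)
      ultimately show ?thesis by linarith
    qed
  qed
  define h where "h x = f x * exp (x / xt)" for x
  have cont: "continuous_on {0..X} f"
    by (rule DERIV_continuous_on[OF deriv])
  have conth: "continuous_on {0..xt} h"
    unfolding h_def
    by (intro continuous_intros continuous_on_subset[OF cont]) (use xt in auto)
  have "h 0 < h xt"
  proof (rule DERIV_pos_imp_increasing_open[OF xt(1) _ conth])
    fix x assume x: "0 < x" "x < xt"
    have d1: "(f has_real_derivative f' x) (at x)"
    proof -
      have "(f has_real_derivative f' x) (at x within {0<..<X})"
        using deriv[of x] x xt by (intro DERIV_subset[OF deriv[of x]]) auto
      moreover have "at x within {0<..<X} = at x"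
        using x xt by (intro at_within_open) auto
      ultimately show ?thesis by simp
    qed
    have "(h has_real_derivative (f' x * exp (x/xt) + f x * (exp (x/xt) * (1/xt)))) (at x)"
    proof -
      have "((\<lambda>x. x / xt) has_real_derivative 1 / xt) (at x)"
        using DERIV_cdivide[OF DERIV_ident, of xt] by simp
      then have d2: "((\<lambda>x. exp (x / xt)) has_real_derivative exp (x/xt) * (1/xt)) (at x)"
        by (rule DERIV_fun_exp)
      have hh: "h = (\<lambda>x. f x * exp (x/xt))" by (simp add: h_def fun_eq_iff)
      have "((\<lambda>x. f x * exp (x/xt)) has_real_derivative (f' x * exp (x/xt) + f x * (exp (x/xt) * (1/xt)))) (at x)"
        using DERIV_mult[OF d1 d2] by (simp add: algebra_simps)
      then show ?thesis by (simp add: hh)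
    qed
    moreover have "f' x * exp (x/xt) + f x * (exp (x/xt) * (1/xt)) > 0"
    proof -
      have "xt * f' x + f x > 0" using key[of x] x by auto
      then have "f' x + f x / xt > 0" using xt by (simp add: field_simps)
      then have "(f' x + f x / xt) * exp (x/xt) > 0" by simp
      then show ?thesis by (simp add: algebra_simps)
    qed
    ultimately show "\<exists>y. (h has_real_derivative y) (at x) \<and> 0 < y" by blast
  qed
  then show ?thesis using xt by (simp add: h_def mult.commute)
qed

end
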